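(* Let $\mathcal{C}_f$ be a CRN stably computing $f:\mathbb{N}^d\to\mathbb{N}$ such that for every CRN $\mathcal{C}_g$ stably computing a function $g:\mathbb{N}\to\mathbb{N}$, the concatenated CRN $\mathcal{C}_{g\circ f}$ stably computes $g\circ f$. Then the CRN obtained from $\mathcal{C}_f$ by removing every reaction that has the output species of $\mathcal{C}_f$ as a reactant (which is output-oblivious) still stably computes $f$.
   Context: A chemical reaction network (CRN) is a pair $(\mathcal{S},\mathcal{R})$ of a finite set of species and a finite set of reactions $(\vec{R},\vec{P})\in\mathbb{N}^{\mathcal{S}}\times\mathbb{N}^{\mathcal{S}}$. A configuration is $\vec{C}\in\mathbb{N}^{\mathcal{S}}$; a reaction is applicable if $\vec{R}\le\vec{C}$ and yields $\vec{C}-\vec{R}+\vec{P}$; reachability is via finite sequences of applicable reactions. To compute $h:\mathbb{N}^k\to\mathbb{N}$ a CRN has input species $X_1,\ldots,X_k$, output species $Y$, leader species $L$; the initial configuration $\vec{I}_{\vec{x}}$ has $\vec{x}(i)$ copies of $X_i$, one $L$, nothing else. $\vec{C}$ is stable if all configurations reachable from it have the same count of $Y$. The CRN stably computes $h$ if for every $\vec{x}$ and every $\vec{C}$ reachable from $\vec{I}_{\vec{x}}$ some stable $\vec{O}$ reachable from $\vec{C}$ has $\vec{O}(Y)=h(\vec{x})$. A CRN is output-oblivious if its output species is never a reactant. The concatenated CRN $\mathcal{C}_{g\circ f}$ is obtained by taking the union of the species and reactions of $\mathcal{C}_f$ and $\mathcal{C}_g$, where the output species of $\mathcal{C}_f$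 is identified with the input species of $\mathcal{C}_g$ and all other species are disjoint; with leaders $L^f$, $L^g$ of $\mathcal{C}_f$, $\mathcal{C}_g$, a new leader $L$ and the reaction $L\to L^f+L^g$ are added. Its inputs are those of $\mathcal{C}_f$, its output is that of $\mathcal{C}_g$. *)

theory Defs
  imports Main
begin

type_synonym 'a config = "'a \<Rightarrow> nat"
type_synonym 'a reaction = "'a config \<times> 'a config"

record 'a crn =
  species   :: "'a set"
  reactions :: "'a reaction set"
  inputs    :: "'a list"
  out_sp    :: "'a"
  leader    :: "'a"

definition wf_crn :: "'a crn \<Rightarrow> bool" where
  "wf_crn C \<longleftrightarrow>
     finite (species C) \<and> finite (reactions C) \<and>
     (\<forall>(R, P) \<in> reactions C. \<forall>s. (R s \<noteq> 0 \<or> P s \<noteq> 0) \<longrightarrow> s \<in> species C) \<and>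
     set (inputs C) \<subseteq> species C \<and> distinct (inputs C) \<and>
     out_sp C \<in> species C \<and> leader C \<in> species C \<and>
     out_sp C \<notin> set (inputs C) \<and> leader C \<notin> set (inputs C) \<and>
     leader C \<noteq> out_sp C"

definition step :: "'a crn \<Rightarrow> 'a config \<Rightarrow> 'a config \<Rightarrow> bool" where
  "step C c c' \<longleftrightarrow>
     (\<exists>(R, P) \<in> reactions C. R \<le> c \<and> c' = (\<lambda>s. c s - R s + P s))"

definition reach :: "'a crn \<Rightarrow> 'a config \<Rightarrow> 'a config \<Rightarrow> bool" where
  "reach C = (step C)\<^sup>*\<^sup>*"

definition init :: "'a crn \<Rightarrow> nat list \<Rightarrow> 'a config" where
  "init C x = (\<lambda>s. (\<Sum>i<length (inputs C). if inputs C ! i = s then x ! i else 0)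
                   + (if s = leader C then 1 else 0))"

definition stable :: "'a crn \<Rightarrow> 'a config \<Rightarrow> bool" where
  "stable C c \<longleftrightarrow> (\<forall>c'. reach C c c' \<longrightarrow> c' (out_sp C) = c (out_sp C))"

definition stably_computes :: "'a crn \<Rightarrow> nat \<Rightarrow> (nat list \<Rightarrow> nat) \<Rightarrow> bool" where
  "stably_computes C d h \<longleftrightarrow>
     length (inputs C) = d \<and>
     (\<forall>x. length x = d \<longrightarrow>
        (\<forall>c. reach C (init C x) c \<longrightarrow>
           (\<exists>o'. reach C c o' \<and> stable C o' \<and> o' (out_sp C) = h x)))"

definition output_oblivious :: "'a crn \<Rightarrow> bool" where
  "output_oblivious C \<longleftrightarrow> (\<forall>(R, P) \<in> reactions C. R (out_sp C) = 0)"

text \<open>Species of the concatenated CRN: disjoint copies of the species of C_f and C_g,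
  plus a fresh leader.  The input species of C_g is identified with the output of C_f.\<close>
datatype ('a, 'b) cspec = SF 'a | SG 'b | SL

definition emb_g :: "'a crn \<Rightarrow> 'b crn \<Rightarrow> 'b \<Rightarrow> ('a, 'b) cspec" where
  "emb_g Cf Cg t = (if t = hd (inputs Cg) then SF (out_sp Cf) else SG t)"

definition lift_f :: "'a config \<Rightarrow> ('a, 'b) cspec config" where
  "lift_f v = (\<lambda>s. case s of SF a \<Rightarrow> v a | _ \<Rightarrow> 0)"

definition lift_g :: "'a crn \<Rightarrow> 'b crn \<Rightarrow> 'b config \<Rightarrow> ('a, 'b) cspec config" where
  "lift_g Cf Cg v = (\<lambda>s. case s of
       SF a \<Rightarrow> (if a = out_sp Cf then v (hd (inputs Cg)) else 0)
     | SG t \<Rightarrow> (if t = hd (inputs Cg) then 0 else v t)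
     | SL \<Rightarrow> 0)"

definition concat_crn :: "'a crn \<Rightarrow> 'b crn \<Rightarrow> ('a, 'b) cspec crn" where
  "concat_crn Cf Cg =
     \<lparr> species = SF ` species Cf \<union> emb_g Cf Cg ` species Cg \<union> {SL},
       reactions =
         (\<lambda>(R, P). (lift_f R, lift_f P)) ` reactions Cf
         \<union> (\<lambda>(R, P). (lift_g Cf Cg R, lift_g Cf Cg P)) ` reactions Cg
         \<union> {((\<lambda>s. if s = SL then 1 else 0),
             (\<lambda>s. (if s = SF (leader Cf) then 1 else 0)
                  + (if s = emb_g Cf Cg (leader Cg) then 1 else 0)))},
       inputs = map SF (inputs Cf),
       out_sp = emb_g Cf Cg (out_sp Cg),
       leader = SL \<rparr>"

definition remove_output_reactant :: "'a crn \<Rightarrow> 'a crn" where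
  "remove_output_reactant C =
     C \<lparr> reactions := {(R, P) \<in> reactions C. R (out_sp C) = 0} \<rparr>"

end

theory Submission imports Defs begin

definition Cid :: "nat crn" where
  "Cid = \<lparr> species = {0,1,2},
           reactions = {((\<lambda>s. if s = 0 then 1 else 0), (\<lambda>s. if s = 1 then 1 else 0))},
           inputs = [0], out_sp = 1, leader = 2 \<rparr>"

definition G :: "nat \<Rightarrow> nat \<Rightarrow> nat config" where
  "G a b = (\<lambda>s. if s = 0 then a else if s = 1 then b else if s = 2 then 1 else 0)"

lemma Cid_step: "step Cid (G a b) c \<Longrightarrow> a > 0 \<and> c = G (a - 1) (b + 1)"
  unfolding step_def Cid_def
  apply (auto simp: le_fun_def)
  apply (drule_tac x=0 in spec, simp add: G_def)
  apply (rule ext, simp add: G_def)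
  done

lemma Cid_step2: "a > 0 \<Longrightarrow> step Cid (G a b) (G (a - 1) (b + 1))"
  unfolding step_def Cid_def
  by (auto simp: le_fun_def G_def intro!: ext)

lemma Cid_reach: "reach Cid c c' \<Longrightarrow> c = G a b \<Longrightarrow> \<exists>k\<le>a. c' = G (a - k) (b + k)"
  unfolding reach_def
proof (induction arbitrary: a b rule: converse_rtranclp_induct)
  case base then show ?case by (intro exI[of _ 0]) auto
next
  case (step y z)
  from Cid_step[of a b z] step obtain "a > 0" "z = G (a - 1) (b + 1)" by auto
  with step.IH obtain k where "k \<le> a - 1" "c' = G (a - 1 - k) (b + 1 + k)" by blast
  then show ?case using \<open>a > 0\<close> by (intro exI[of _ "Suc k"]) auto
qed

lemma Cid_reach2: "reach Cid (G a b) (G 0 (a + b))"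
  unfolding reach_def
proof (induction a arbitrary: b)
  case 0 then show ?case by simp
next
  case (Suc a)
  have "step Cid (G (Suc a) b) (G a (b + 1))" using Cid_step2[of "Suc a" b] by simp
  moreover have "(step Cid)\<^sup>*\<^sup>* (G a (b+1)) (G 0 (Suc a + b))" using Suc[of "b+1"] by simp
  ultimately show ?case by (rule converse_rtranclp_into_rtranclp)
qed

lemma Cid_wf: "wf_crn Cid"
  unfolding wf_crn_def Cid_def by auto

lemma Cid_init: "init Cid [n] = G n 0"
  unfolding init_def Cid_def G_def by (auto intro!: ext)

lemma Cid_computes: "stably_computes Cid 1 (\<lambda>xs. id (xs ! 0))"
  unfolding stably_computes_def
proof (intro conjI allI impI)
  show "length (inputs Cid) = 1" by (simp add: Cid_def)
  fix x :: "nat list" and c assume "length x = 1" "reach Cid (init Cid x) c"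
  then obtain n where x: "x = [n]" by (cases x) auto
  with \<open>reach Cid (init Cid x) c\<close> obtain k where "k \<le> n" "c = G (n - k) k"
    using Cid_reach[of "init Cid x" c n 0] Cid_init by auto
  then have r: "reach Cid c (G 0 n)" using Cid_reach2[of "n-k" k] by simp
  have "stable Cid (G 0 n)"
    unfolding stable_def
  proof (intro allI impI)
    fix c' assume "reach Cid (G 0 n) c'"
    then obtain k where "k \<le> 0" "c' = G (0 - k) (n + k)" using Cid_reach by blast
    then show "c' (out_sp Cid) = G 0 n (out_sp Cid)" by simp
  qed
  then show "\<exists>o'. reach Cid c o' \<and> stable Cid o' \<and> o' (out_sp Cid) = id (x ! 0)"
    using r x by (intro exI[of _ "G 0 n"]) (auto simp: G_def Cid_def)
qed

definition E :: "'a config \<Rightarrow> nat \<Rightarrow> ('a, nat) cspec config" where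
  "E c k = (\<lambda>s. case s of SF a \<Rightarrow> c a | SG t \<Rightarrow> (if t = 1 then k else if t = 2 then 1 else 0) | SL \<Rightarrow> 0)"

lemma E_SF[simp]: "E c k (SF a) = c a" by (simp add: E_def)
lemma E_SG1[simp]: "E c k (SG 1) = k" by (simp add: E_def)
lemma E_SL[simp]: "E c k SL = 0" by (simp add: E_def)

lemma emb_simps[simp]: "emb_g Cf Cid 0 = SF (out_sp Cf)" "t \<noteq> 0 \<Longrightarrow> emb_g Cf Cid t = SG t"
  by (auto simp: emb_g_def Cid_def)

lemma cc_simps[simp]: "out_sp (concat_crn Cf Cid) = SG 1" "inputs (concat_crn Cf Cid) = map SF (inputs Cf)"
  "leader (concat_crn Cf Cid) = SL"
  by (auto simp: concat_crn_def Cid_def emb_g_def)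

lemma cc_reactions: "reactions (concat_crn Cf Cid) =
   (\<lambda>(R, P). (lift_f R, lift_f P)) ` reactions Cf
   \<union> {((\<lambda>s. if s = SF (out_sp Cf) then 1 else 0), (\<lambda>s. if s = SG 1 then 1 else 0))}
   \<union> {((\<lambda>s. if s = SL then 1 else 0),
             (\<lambda>s. (if s = SF (leader Cf) then 1 else 0) + (if s = SG 2 then 1 else 0)))}"
  unfolding concat_crn_def
  by (auto simp: Cid_def lift_g_def emb_g_def intro!: ext split: cspec.splits)

lemma F1:
  assumes "wf_crn Cf"
  shows "step (concat_crn Cf Cid) (init (concat_crn Cf Cid) x) (E (init Cf x) 0)"
proof -
  have ln: "leader Cf \<notin> set (inputs Cf)" using assms by (simp add: wf_crn_def)
  have sg: "(\<Sum>i<length (inputs Cf). if SF (inputs Cf ! i) = SG t then x ! i else 0) = 0" for t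
    by simp
  have sl: "(\<Sum>i<length (inputs Cf). if SF (inputs Cf ! i) = SL then x ! i else 0) = 0"
    by simp
  show ?thesis
    unfolding step_def cc_reactions
    apply (rule bexI[where x="((\<lambda>s. if s = SL then 1 else 0),
             (\<lambda>s. (if s = SF (leader Cf) then 1 else 0) + (if s = SG 2 then 1 else 0)))"])
     apply (auto simp: le_fun_def init_def E_def intro!: ext split: cspec.splits)
    done
qed

lemma F2:
  assumes "step Cf c c'"
  shows "step (concat_crn Cf Cid) (E c k) (E c' k)"
proof -
  from assms obtain R P where RP: "(R, P) \<in> reactions Cf" "R \<le> c" "c' = (\<lambda>s. c s - R s + P s)"
    unfolding step_def by auto
  show ?thesis
    unfolding step_def cc_reactions
    apply (rule bexI[where x="(lift_f R, lift_f P)"])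
    using RP by (auto simp: le_fun_def E_def lift_f_def intro!: ext split: cspec.splits)
qed

lemma F3:
  assumes "c (out_sp Cf) > 0"
  shows "step (concat_crn Cf Cid) (E c k) (E (c(out_sp Cf := c (out_sp Cf) - 1)) (k + 1))"
  unfolding step_def cc_reactions
  apply (rule bexI[where x="((\<lambda>s. if s = SF (out_sp Cf) then 1 else 0), (\<lambda>s. if s = SG 1 then 1 else 0))"])
  using assms by (auto simp: le_fun_def E_def intro!: ext split: cspec.splits)

lemma F4:
  assumes "step (concat_crn Cf Cid) (E c k) s'" "c (out_sp Cf) = 0"
  shows "\<exists>c'. s' = E c' k \<and> step (remove_output_reactant Cf) c c'"
proof -
  from assms(1) obtain R P where RP: "(R, P) \<in> reactions (concat_crn Cf Cid)" "R \<le> E c k"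
     "s' = (\<lambda>s. E c k s - R s + P s)"
    unfolding step_def by auto
  show ?thesis
  proof (cases "(R, P) \<in> (\<lambda>(R, P). (lift_f R, lift_f P)) ` reactions Cf")
    case True
    then obtain R0 P0 where R0: "(R0, P0) \<in> reactions Cf" "R = lift_f R0" "P = lift_f P0" by auto
    have le: "R0 \<le> c" unfolding le_fun_def
    proof
      fix a show "R0 a \<le> c a" using RP(2) unfolding R0 le_fun_def
        by (drule_tac x="SF a" in spec) (simp add: lift_f_def)
    qed
    then have "R0 (out_sp Cf) = 0" using assms(2) by (metis le_fun_def le_zero_eq)
    then have st: "step (remove_output_reactant Cf) c (\<lambda>s. c s - R0 s + P0 s)"
      unfolding step_def remove_output_reactant_def using R0 le by auto
    have "s' = E (\<lambda>s. c s - R0 s + P0 s) k"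
      unfolding RP(3) R0 by (auto simp: E_def lift_f_def intro!: ext split: cspec.splits)
    with st show ?thesis by blast
  next
    case False
    then have "R = (\<lambda>s. if s = SF (out_sp Cf) then 1 else 0) \<or> R = (\<lambda>s. if s = SL then 1 else 0)"
      using RP(1) unfolding cc_reactions by auto
    then show ?thesis
    proof
      assume "R = (\<lambda>s. if s = SF (out_sp Cf) then 1 else 0)"
      then show ?thesis using RP(2) assms(2) unfolding le_fun_def
        by (drule_tac x="SF (out_sp Cf)" in spec) simp
    next
      assume "R = (\<lambda>s. if s = SL then 1 else 0)"
      then show ?thesis using RP(2) unfolding le_fun_def
        by (drule_tac x="SL" in spec) simp
    qed
  qed
qed

lemma F5:
  assumes "step (concat_crn Cf Cid) s s'"
  shows "s (SG 1) \<le> s' (SG 1)"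
  using assms unfolding step_def cc_reactions by (auto simp: lift_f_def)

lemma F5r: "reach (concat_crn Cf Cid) s s' \<Longrightarrow> s (SG 1) \<le> s' (SG 1)"
  unfolding reach_def
  by (induction rule: rtranclp_induct) (auto dest: F5)


lemma Cr_simps[simp]: "inputs (remove_output_reactant C) = inputs C"
  "out_sp (remove_output_reactant C) = out_sp C" "leader (remove_output_reactant C) = leader C"
  "init (remove_output_reactant C) = init C"
  by (auto simp: remove_output_reactant_def init_def intro!: ext)

lemma Cr_mono: "step (remove_output_reactant C) a b \<Longrightarrow> a (out_sp C) \<le> b (out_sp C)"
  unfolding step_def remove_output_reactant_def by auto

lemma Cr_mono_r: "reach (remove_output_reactant C) a b \<Longrightarrow> a (out_sp C) \<le> b (out_sp C)"
  unfolding reach_def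
  by (induction rule: rtranclp_induct) (auto dest: Cr_mono)

lemma shift_step: "step C a b \<Longrightarrow> step C (\<lambda>s. a s + v s) (\<lambda>s. b s + v s)"
proof -
  assume "step C a b"
  then obtain R P where RP: "(R, P) \<in> reactions C" "R \<le> a" "b = (\<lambda>s. a s - R s + P s)"
    unfolding step_def by auto
  have 1: "R \<le> (\<lambda>s. a s + v s)" using RP(2) by (auto simp: le_fun_def trans_le_add1)
  have 2: "(\<lambda>s. b s + v s) = (\<lambda>s. (a s + v s) - R s + P s)"
  proof
    fix s have "R s \<le> a s" using RP(2) by (simp add: le_fun_def)
    then show "b s + v s = (a s + v s) - R s + P s" using RP(3) by simp
  qed
  note 1 2
  with RP(1) show ?thesis unfolding step_def by auto
qed

lemma shift_reach: "reach C a b \<Longrightarrow> reach C (\<lambda>s. a s + v s) (\<lambda>s. b s + v s)"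
  unfolding reach_def
  by (induction rule: rtranclp_induct) (auto dest: shift_step[where v=v] intro: rtranclp.rtrancl_into_rtrancl)

lemma Cr_to_cc: "reach (remove_output_reactant Cf) a b \<Longrightarrow> reach (concat_crn Cf Cid) (E a k) (E b k)"
  unfolding reach_def
proof (induction rule: rtranclp_induct)
  case (step y z)
  have "step Cf y z" using step(2) unfolding step_def remove_output_reactant_def by auto
  then have "step (concat_crn Cf Cid) (E y k) (E z k)" by (rule F2)
  with step(3) show ?case by auto
qed simp

lemma steal_all: "c (out_sp Cf) = n \<Longrightarrow>
  reach (concat_crn Cf Cid) (E c k) (E (c(out_sp Cf := 0)) (k + n))"
  unfolding reach_def
proof (induction n arbitrary: c k)
  case 0
  then have "c(out_sp Cf := 0) = c" by auto
  then show ?case by simp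
next
  case (Suc n)
  let ?c' = "c(out_sp Cf := c (out_sp Cf) - 1)"
  have a: "step (concat_crn Cf Cid) (E c k) (E ?c' (k + 1))" using Suc.prems by (intro F3) simp
  have b: "(step (concat_crn Cf Cid))\<^sup>*\<^sup>* (E ?c' (k + 1)) (E (?c'(out_sp Cf := 0)) (k + 1 + n))"
    by (rule Suc.IH) (use Suc.prems in simp)
  have c: "?c'(out_sp Cf := 0) = c(out_sp Cf := 0)" by simp
  have d: "k + 1 + n = k + Suc n" by simp
  show ?case using converse_rtranclp_into_rtranclp[OF a b] unfolding c d .
qed

lemma key: "reach (concat_crn Cf Cid) s o' \<Longrightarrow> s = E a k \<Longrightarrow> a (out_sp Cf) = 0 \<Longrightarrow> o' (SG 1) > k \<Longrightarrow>
   \<exists>a'. reach (remove_output_reactant Cf) a a' \<and> a' (out_sp Cf) > 0"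
  unfolding reach_def
proof (induction arbitrary: a rule: converse_rtranclp_induct)
  case base then show ?case by (simp add: E_def)
next
  case (step y z)
  from F4[of Cf a k z] step.prems step.hyps(1) obtain c' where
    c': "z = E c' k" "step (remove_output_reactant Cf) a c'" by auto
  show ?case
  proof (cases "c' (out_sp Cf) > 0")
    case True then show ?thesis using c' by auto
  next
    case False
    then obtain a' where "(step (remove_output_reactant Cf))\<^sup>*\<^sup>* c' a'" "a' (out_sp Cf) > 0"
      using step.IH[OF c'(1)] step.prems by auto
    then show ?thesis using c'(2) by (meson converse_rtranclp_into_rtranclp)
  qed
qed

lemma reach_trans: "reach C a b \<Longrightarrow> reach C b c \<Longrightarrow> reach C a c"
  unfolding reach_def by (rule rtranclp_trans)

lemma reach_step: "step C a b \<Longrightarrow> reach C a b"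
  unfolding reach_def by (rule r_into_rtranclp)

theorem lemma3:
  fixes Cf :: "'a crn" and d :: nat and f :: "nat list \<Rightarrow> nat"
  assumes "wf_crn Cf"
    and "stably_computes Cf d f"
    and "\<forall>(g :: nat \<Rightarrow> nat) (Cg :: nat crn).
           wf_crn Cg \<and> stably_computes Cg 1 (\<lambda>xs. g (xs ! 0)) \<longrightarrow>
           stably_computes (concat_crn Cf Cg) d (\<lambda>xs. g (f xs))"
  shows "output_oblivious (remove_output_reactant Cf) \<and>
         stably_computes (remove_output_reactant Cf) d f"
proof -
  let ?Cr = "remove_output_reactant Cf"
  let ?Cc = "concat_crn Cf Cid"
  let ?Y = "out_sp Cf"
  have cc: "stably_computes ?Cc d (\<lambda>xs. id (f xs))"
    using assms(3) Cid_wf Cid_computes by blast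
  have oo: "output_oblivious ?Cr"
    unfolding output_oblivious_def remove_output_reactant_def by auto
  have len: "length (inputs Cf) = d" using assms(2) by (simp add: stably_computes_def)
  have main: "\<exists>o'. reach ?Cr c o' \<and> stable ?Cr o' \<and> o' (out_sp ?Cr) = f x"
    if lx: "length x = d" and rc: "reach ?Cr (init ?Cr x) c" for x c
  proof -
    have toS: "reach ?Cc (init ?Cc x) (E (b(?Y := 0)) (b ?Y))" if "reach ?Cr (init Cf x) b" for b
    proof -
      have "reach ?Cc (init ?Cc x) (E (init Cf x) 0)" by (rule reach_step, rule F1, rule assms(1))
      moreover have "reach ?Cc (E (init Cf x) 0) (E b 0)" using that by (rule Cr_to_cc)
      moreover have "reach ?Cc (E b 0) (E (b(?Y := 0)) (b ?Y))" using steal_all[of b Cf "b ?Y" 0] by simp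
      ultimately show ?thesis by (blast intro: reach_trans)
    qed
    have bound: "b ?Y \<le> f x" if hb: "reach ?Cr (init Cf x) b" for b
    proof -
      obtain o' where r1: "reach ?Cc (E (b(?Y := 0)) (b ?Y)) o'" and r2: "o' (SG 1) = f x"
        using cc toS[OF hb] lx unfolding stably_computes_def by fastforce
      have "E (b(?Y := 0)) (b ?Y) (SG 1) \<le> o' (SG 1)" using r1 by (rule F5r)
      then show ?thesis using r2 by (simp add: E_def)
    qed
    have rc': "reach ?Cr (init Cf x) c" using rc by simp
    define S where "S = {b ?Y | b. reach ?Cr c b}"
    have finS: "finite S"
    proof (rule finite_subset[of _ "{..f x}"])
      show "S \<subseteq> {..f x}"
      proof
        fix n assume "n \<in> S"
        then obtain b where "n = b ?Y" "reach ?Cr c b" by (auto simp: S_def)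
        then show "n \<in> {..f x}" using bound[OF reach_trans[OF rc']] by auto
      qed
    qed simp
    have "c ?Y \<in> S" unfolding S_def reach_def by auto
    then have "Max S \<in> S" using finS by (intro Max_in) auto
    then obtain b where rb: "reach ?Cr c b" and bm: "b ?Y = Max S" unfolding S_def by auto
    have maxb: "b' ?Y \<le> b ?Y" if "reach ?Cr b b'" for b'
    proof -
      have "b' ?Y \<in> S" unfolding S_def using reach_trans[OF rb that] by auto
      then show ?thesis using finS bm by simp
    qed
    have st: "stable ?Cr b"
      unfolding stable_def using maxb Cr_mono_r by (fastforce intro: antisym)
    have rib: "reach ?Cr (init Cf x) b" using reach_trans[OF rc' rb] .
    have eq: "b ?Y = f x"
    proof (rule ccontr)
      assume "b ?Y \<noteq> f x"
      then have lt: "b ?Y < f x" using bound[OF rib] by simp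
      obtain o' where ro: "reach ?Cc (E (b(?Y := 0)) (b ?Y)) o'" and oo': "o' (SG 1) = f x"
        using cc toS[OF rib] lx unfolding stably_computes_def by fastforce
      obtain a' where ra: "reach ?Cr (b(?Y := 0)) a'" and ap: "a' ?Y > 0"
        using key[OF ro refl] lt oo' by auto
      define v where "v = (\<lambda>s. if s = ?Y then b ?Y else 0)"
      have "reach ?Cr (\<lambda>s. (b(?Y := 0)) s + v s) (\<lambda>s. a' s + v s)"
        using ra by (rule shift_reach)
      moreover have "(\<lambda>s. (b(?Y := 0)) s + v s) = b" by (auto simp: v_def)
      ultimately have "reach ?Cr b (\<lambda>s. a' s + v s)" by simp
      from maxb[OF this] ap show False by (simp add: v_def)
    qed
    show ?thesis using rb st eq by auto
  qed
  show ?thesis using oo main len unfolding stably_computes_def by simp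
qed

end
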